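(* Let $B$ be an associative ring with unit, let $n\geq 3$, and let $\phi$ be a homogeneous quasi-homomorphism on $\Gamma=EL_n(B)$. Then: (1) $\phi(s)=0$ for every elementary matrix $s\in\Gamma$; (2) $\phi(h)=0$ for every $h\in U_nB\cup L_nB$.
   Context: An elementary matrix in $M_n(B)$ is a matrix whose diagonal entries are $1$ and all of whose off-diagonal entries except at most one are $0$; $EL_n(B)$ is the group generated by all elementary matrices. $U_nB$ (resp. $L_nB$) denotes the group of unit upper (resp. lower) triangular matrices in $EL_n(B)$, i.e. those with all diagonal entries $1$ and all entries below (resp. above) the diagonal equal to $0$. A quasi-homomorphism on a group $\Gamma$ is a function $\phi\colon\Gamma\to\mathbb{R}$ with $\sup_{g,h\in\Gamma}|\phi(gh)-\phi(g)-\phi(h)|<\infty$; it is homogeneous if $\phi(g^m)=m\,\phi(g)$ for all $g\in\Gamma$ and $m\in\mathbb{Z}$. *)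

theory Defs
  imports "HOL-Analysis.Analysis"
begin

text \<open>Square matrices over a unital (not necessarily commutative) ring 'a, indexed by a
finite linearly ordered type 'n (so n = CARD('n)); entry (i,j) is A $ i $ j.\<close>

definition elementary_mat :: "'a::ring_1 ^('n::{finite,linorder}) ^'n::{finite,linorder} \<Rightarrow> bool" where
  "elementary_mat s \<longleftrightarrow> (\<forall>i. s $ i $ i = 1) \<and>
     (\<forall>i j k l. i \<noteq> j \<and> k \<noteq> l \<and> s $ i $ j \<noteq> 0 \<and> s $ k $ l \<noteq> 0 \<longrightarrow> (i, j) = (k, l))"

inductive_set EL :: "('a::ring_1 ^('n::{finite,linorder}) ^'n::{finite,linorder}) set" where
  EL_gen: "elementary_mat s \<Longrightarrow> s \<in> EL"
| EL_one: "mat 1 \<in> EL"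
| EL_mult: "x \<in> EL \<Longrightarrow> y \<in> EL \<Longrightarrow> x ** y \<in> EL"
| EL_inv: "x \<in> EL \<Longrightarrow> x ** y = mat 1 \<Longrightarrow> y ** x = mat 1 \<Longrightarrow> y \<in> EL"

definition mat_inv2 :: "'a::ring_1 ^('n::finite) ^'n::finite \<Rightarrow> 'a ^'n ^'n" where
  "mat_inv2 g = (SOME h. g ** h = mat 1 \<and> h ** g = mat 1)"

fun mat_npow :: "'a::ring_1 ^('n::finite) ^'n::finite \<Rightarrow> nat \<Rightarrow> 'a ^'n ^'n" where
  "mat_npow g 0 = mat 1"
| "mat_npow g (Suc k) = g ** mat_npow g k"

definition mat_ipow :: "'a::ring_1 ^('n::finite) ^'n::finite \<Rightarrow> int \<Rightarrow> 'a ^'n ^'n" where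
  "mat_ipow g m = (if 0 \<le> m then mat_npow g (nat m) else mat_npow (mat_inv2 g) (nat (- m)))"

definition quasi_hom_on :: "'g set \<Rightarrow> ('g \<Rightarrow> 'g \<Rightarrow> 'g) \<Rightarrow> ('g \<Rightarrow> real) \<Rightarrow> bool" where
  "quasi_hom_on G f \<phi> \<longleftrightarrow> (\<exists>C. \<forall>g\<in>G. \<forall>h\<in>G. \<bar>\<phi> (f g h) - \<phi> g - \<phi> h\<bar> \<le> C)"

definition homogeneous_EL :: "('a::ring_1 ^('n::{finite,linorder}) ^'n::{finite,linorder} \<Rightarrow> real) \<Rightarrow> bool" where
  "homogeneous_EL \<phi> \<longleftrightarrow> (\<forall>g\<in>EL. \<forall>m::int. \<phi> (mat_ipow g m) = of_int m * \<phi> g)"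

definition upper_unitri :: "('a::ring_1 ^('n::{finite,linorder}) ^'n::{finite,linorder}) set" where
  "upper_unitri = {h \<in> EL. (\<forall>i. h $ i $ i = 1) \<and> (\<forall>i j. j < i \<longrightarrow> h $ i $ j = 0)}"

definition lower_unitri :: "('a::ring_1 ^('n::{finite,linorder}) ^'n::{finite,linorder}) set" where
  "lower_unitri = {h \<in> EL. (\<forall>i. h $ i $ i = 1) \<and> (\<forall>i j. i < j \<longrightarrow> h $ i $ j = 0)}"

end

theory Submission
  imports Defs
begin

definition Em :: "'n::finite \<Rightarrow> 'n \<Rightarrow> 'a::ring_1 \<Rightarrow> 'a^'n^'n" where
  "Em i j x = (\<chi> a b. (if a = b then 1 else 0) + (if a = i \<and> b = j then x else 0))"

lemma Em_comp: "Em i j x $ a $ b = (if a = b then 1 else 0) + (if a = i \<and> b = j then x else 0)"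
  by (simp add: Em_def)

lemma Em_mult: "(Em i j x ** M) $ a $ b = M $ a $ b + (if a = i then x * M $ j $ b else 0)"
  by (simp add: Em_def matrix_matrix_mult_def distrib_right sum.distrib if_distrib[of "\<lambda>y. y * _"] cong: if_cong)

lemma mat1_comp: "(mat 1 :: 'a::ring_1^'n::finite^'n) $ a $ b = (if a = b then 1 else 0)"
  by (simp add: mat_def)

lemma Em_add: "i \<noteq> j \<Longrightarrow> Em i j x ** Em i j y = Em i j (x + y)"
  by (simp add: vec_eq_iff Em_mult Em_comp)

lemma Em_zero: "Em i j 0 = mat 1"
  by (simp add: vec_eq_iff Em_comp mat1_comp)

lemma Em_comm: "i \<noteq> j \<Longrightarrow> i \<noteq> k \<Longrightarrow> j \<noteq> k \<Longrightarrow>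
   Em i k x ** (Em k j y ** (Em i k (-x) ** Em k j (-y))) = Em i j (x * y)"
  by (simp add: vec_eq_iff Em_mult Em_comp algebra_simps)

lemma Em_elem: "i \<noteq> j \<Longrightarrow> elementary_mat (Em i j x)"
  unfolding elementary_mat_def Em_comp by auto

lemma matI: "(\<And>a b. A $ a $ b = B $ a $ b) \<Longrightarrow> A = B"
  by (simp add: vec_eq_iff)

lemma elem_cases:
  fixes s :: "'a::ring_1^('n::{finite,linorder})^'n::{finite,linorder}"
  assumes "elementary_mat s"
  shows "s = mat 1 \<or> (\<exists>i j x. i \<noteq> j \<and> s = Em i j x)"
proof -
  have d0: "\<forall>i. s $ i $ i = 1" using assms unfolding elementary_mat_def by (rule conjunct1)
  have d: "\<And>i. s $ i $ i = 1" using d0 by (rule spec)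
  have u0: "\<forall>i j k l. i \<noteq> j \<and> k \<noteq> l \<and> s $ i $ j \<noteq> 0 \<and> s $ k $ l \<noteq> 0 \<longrightarrow> (i, j) = (k, l)"
    using assms unfolding elementary_mat_def by (rule conjunct2)
  have u: "(i, j) = (k, l)" if "i \<noteq> j" "k \<noteq> l" "s $ i $ j \<noteq> 0" "s $ k $ l \<noteq> 0" for i j k l
    using u0 that by (elim allE[of _ i] allE[of _ j] allE[of _ k] allE[of _ l]) (erule impE, simp, assumption)
  show ?thesis
  proof (cases "\<exists>i j. i \<noteq> j \<and> s $ i $ j \<noteq> 0")
    case True
    then obtain i j where ij: "i \<noteq> j" "s $ i $ j \<noteq> 0" by blast
    have "s $ a $ b = Em i j (s $ i $ j) $ a $ b" for a b
    proof (cases "a = b")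
      case True then show ?thesis using d ij by (simp add: Em_comp)
    next
      case False
      show ?thesis
      proof (cases "s $ a $ b = 0")
        case z: True
        have "\<not> (a = i \<and> b = j)" using z ij by metis
        then show ?thesis unfolding Em_comp if_not_P[OF False] if_not_P[OF \<open>\<not> (a = i \<and> b = j)\<close>] z by simp
      next
        case nz: False
        have "(a, b) = (i, j)" using u[OF False ij(1) nz ij(2)] .
        then show ?thesis using False by (simp add: Em_comp)
      qed
    qed
    then have "s = Em i j (s $ i $ j)" by (rule matI)
    then show ?thesis using ij by blast
  next
    case False
    have "s $ a $ b = mat 1 $ a $ b" for a b
      using False d by (cases "a = b") (simp_all add: mat1_comp, blast)
    then have "s = mat 1" by (rule matI)
    then show ?thesis by simp
  qed
qed

lemma Em_npow: assumes ij: "i \<noteq> j" shows "mat_npow (Em i j x) m = Em i j (of_nat m * x)"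
proof (induction m)
  case 0 then show ?case by (simp add: Em_zero)
next
  case (Suc m)
  have "of_nat (Suc m) * x = x + of_nat m * x" by (simp add: distrib_right)
  then show ?case using Suc by (simp only: mat_npow.simps Em_add[OF ij])
qed

lemma Em_inv2: "i \<noteq> j \<Longrightarrow> mat_inv2 (Em i j x) = Em i j (-x)"
proof -
  assume ij: "i \<noteq> j"
  let ?g = "Em i j x"
  have ex: "\<exists>h. ?g ** h = mat 1 \<and> h ** ?g = mat 1"
    by (rule exI[of _ "Em i j (-x)"]) (simp add: Em_add ij Em_zero)
  then have h: "?g ** mat_inv2 ?g = mat 1 \<and> mat_inv2 ?g ** ?g = mat 1"
    unfolding mat_inv2_def by (rule someI_ex)
  have "mat_inv2 ?g = mat_inv2 ?g ** (?g ** Em i j (-x))"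
    by (simp add: Em_add ij Em_zero matrix_mul_rid)
  also have "\<dots> = (mat_inv2 ?g ** ?g) ** Em i j (-x)" by (simp add: matrix_mul_assoc)
  also have "\<dots> = Em i j (-x)" using h by (simp add: matrix_mul_lid)
  finally show ?thesis .
qed

lemma ipow_nat: "mat_ipow g (int m) = mat_npow g m"
  by (simp add: mat_ipow_def)

lemma ipow_m1: "mat_ipow g (-1) = mat_inv2 g"
  by (simp add: mat_ipow_def matrix_mul_rid)

lemma arch_zero:
  fixes a D :: real
  assumes "\<And>m::nat. real m * \<bar>a\<bar> \<le> D"
  shows "a = 0"
proof (rule ccontr)
  assume "a \<noteq> 0"
  then have p: "\<bar>a\<bar> > 0" by simp
  obtain m :: nat where "D / \<bar>a\<bar> < real m" using reals_Archimedean2 by blast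
  then have "D < real m * \<bar>a\<bar>" using p by (simp add: field_simps)
  with assms[of m] show False by simp
qed

lemma part1:
  fixes \<phi> :: "'a::ring_1^('n::{finite,linorder})^'n::{finite,linorder} \<Rightarrow> real"
  assumes card: "CARD('n) \<ge> 3"
    and C: "\<And>g h. g \<in> EL \<Longrightarrow> h \<in> EL \<Longrightarrow> \<bar>\<phi> (g ** h) - \<phi> g - \<phi> h\<bar> \<le> C"
    and hom: "homogeneous_EL \<phi>" and ij: "i \<noteq> j"
  shows "\<phi> (Em i j b) = 0"
proof -
  have "card {i, j} \<le> 2" by (simp add: card_insert_le_m1)
  then have "{i, j} \<noteq> (UNIV :: 'n set)" using card by auto
  then obtain k where k: "k \<noteq> i" "k \<noteq> j" by blast
  have inEL: "Em p q c \<in> EL" if "p \<noteq> q" for p q and c :: 'a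
    using that by (intro EL_gen Em_elem)
  have neg: "\<phi> (Em p q (-c)) = - \<phi> (Em p q c)" if "p \<noteq> q" for p q and c :: 'a
  proof -
    have "\<phi> (mat_ipow (Em p q c) (-1)) = of_int (-1) * \<phi> (Em p q c)"
      using hom inEL[OF that] unfolding homogeneous_EL_def by blast
    then show ?thesis by (simp add: ipow_m1 Em_inv2[OF that])
  qed
  have bnd: "real m * \<bar>\<phi> (Em i j b)\<bar> \<le> 3 * C" for m :: nat
  proof -
    define x where "x = (of_nat m * b :: 'a)"
    let ?x1 = "Em i k x" and ?y1 = "Em k j (1::'a)" and ?x2 = "Em i k (-x)" and ?y2 = "Em k j (-1::'a)"
    have e: "?x1 \<in> EL" "?y1 \<in> EL" "?x2 \<in> EL" "?y2 \<in> EL" using inEL k by (metis (no_types))+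
    have p1: "?x2 ** ?y2 \<in> EL" using e by (intro EL_mult)
    have p2: "?y1 ** (?x2 ** ?y2) \<in> EL" using e p1 by (intro EL_mult)
    have c1: "\<bar>\<phi> (?x1 ** (?y1 ** (?x2 ** ?y2))) - \<phi> ?x1 - \<phi> (?y1 ** (?x2 ** ?y2))\<bar> \<le> C"
      using C e p2 by blast
    have c2: "\<bar>\<phi> (?y1 ** (?x2 ** ?y2)) - \<phi> ?y1 - \<phi> (?x2 ** ?y2)\<bar> \<le> C"
      using C e p1 by blast
    have c3: "\<bar>\<phi> (?x2 ** ?y2) - \<phi> ?x2 - \<phi> ?y2\<bar> \<le> C"
      using C e by blast
    have n1: "\<phi> ?x2 = - \<phi> ?x1" using neg k by auto
    have n2: "\<phi> ?y2 = - \<phi> ?y1" using neg k by auto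
    have eq: "?x1 ** (?y1 ** (?x2 ** ?y2)) = Em i j (x * 1)"
      using Em_comm[of i j k x 1] ij k by auto
    have "\<bar>\<phi> (Em i j x)\<bar> \<le> 3 * C" using c1 c2 c3 n1 n2 eq by simp
    moreover have "\<phi> (Em i j x) = real m * \<phi> (Em i j b)"
    proof -
      have "\<phi> (mat_ipow (Em i j b) (int m)) = of_int (int m) * \<phi> (Em i j b)"
        using hom inEL[OF ij] unfolding homogeneous_EL_def by blast
      then show ?thesis by (simp add: ipow_nat Em_npow[OF ij] x_def)
    qed
    ultimately show ?thesis by (simp add: abs_mult)
  qed
  show ?thesis by (rule arch_zero[OF bnd])
qed

definition zer :: "'a::ring_1^('n::finite)^'n \<Rightarrow> 'n \<Rightarrow> 'n \<Rightarrow> 'a^'n^'n" where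
  "zer M i j = (\<chi> a b. if a = i \<and> b = j then 0 else M $ a $ b)"

definition supp :: "'a::ring_1^('n::finite)^'n \<Rightarrow> ('n \<times> 'n) set" where
  "supp M = {(a, b). a \<noteq> b \<and> M $ a $ b \<noteq> 0}"

definition prodl :: "('a::ring_1^('n::finite)^'n) list \<Rightarrow> 'a^'n^'n" where
  "prodl xs = foldr (**) xs (mat 1)"

lemma decomp:
  assumes "i \<noteq> j" "\<And>k. k \<noteq> j \<Longrightarrow> M $ j $ k = 0" "M $ j $ j = 1"
  shows "M = Em i j (M $ i $ j) ** zer M i j"
  using assms by (auto simp: vec_eq_iff Em_mult zer_def)

lemma supp_zer: "supp (zer M i j) = supp M - {(i, j)}"
  by (auto simp: supp_def zer_def)

lemma factor_gen:
  fixes T :: "('a::ring_1^('n::finite)^'n) set"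
  assumes closed: "\<And>M i j. M \<in> T \<Longrightarrow> i \<noteq> j \<Longrightarrow> zer M i j \<in> T"
    and diag: "\<And>M i. M \<in> T \<Longrightarrow> M $ i $ i = 1"
    and pick: "\<And>M. M \<in> T \<Longrightarrow> supp M \<noteq> {} \<Longrightarrow> \<exists>i j. (i, j) \<in> supp M \<and> (\<forall>k. k \<noteq> j \<longrightarrow> M $ j $ k = 0)"
  shows "M \<in> T \<Longrightarrow> \<exists>xs. M = prodl xs \<and> length xs \<le> card (supp M) \<and> (\<forall>x\<in>set xs. \<exists>i j c. i \<noteq> j \<and> x = Em i j c)"
proof (induction "card (supp M)" arbitrary: M rule: less_induct)
  case less
  show ?case
  proof (cases "supp M = {}")
    case True
    then have "M = mat 1" using diag[OF less.prems] by (auto simp: vec_eq_iff mat1_comp supp_def)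
    then show ?thesis by (intro exI[of _ "[]"]) (simp add: prodl_def)
  next
    case False
    then obtain i j where ij: "(i, j) \<in> supp M" and row: "\<forall>k. k \<noteq> j \<longrightarrow> M $ j $ k = 0"
      using pick[OF less.prems] by blast
    have ne: "i \<noteq> j" using ij by (simp add: supp_def)
    have fin: "finite (supp M)" by simp
    have lt: "card (supp (zer M i j)) < card (supp M)"
      unfolding supp_zer using ij fin by (metis card_Diff1_less)
    obtain xs where xs: "zer M i j = prodl xs" "length xs \<le> card (supp (zer M i j))"
        "\<forall>x\<in>set xs. \<exists>i j c. i \<noteq> j \<and> x = Em i j c"
      using less.hyps[OF lt closed[OF less.prems ne]] by blast
    have "M = Em i j (M $ i $ j) ** zer M i j"
      by (rule decomp[OF ne]) (use row diag[OF less.prems] in auto)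
    then have "M = prodl (Em i j (M $ i $ j) # xs)" using xs by (simp add: prodl_def)
    moreover have "length (Em i j (M $ i $ j) # xs) \<le> card (supp M)" using xs(2) lt by simp
    ultimately show ?thesis using xs(3) ne by (intro exI[of _ "Em i j (M $ i $ j) # xs"]) auto
  qed
qed

definition ushape :: "'a::ring_1^('n::{finite,linorder})^'n::{finite,linorder} \<Rightarrow> bool" where
  "ushape M \<longleftrightarrow> (\<forall>i. M $ i $ i = 1) \<and> (\<forall>i j. j < i \<longrightarrow> M $ i $ j = 0)"

definition lshape :: "'a::ring_1^('n::{finite,linorder})^'n::{finite,linorder} \<Rightarrow> bool" where
  "lshape M \<longleftrightarrow> (\<forall>i. M $ i $ i = 1) \<and> (\<forall>i j. i < j \<longrightarrow> M $ i $ j = 0)"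

lemma ushape_mult:
  assumes A: "ushape A" and B: "ushape B"
  shows "ushape (A ** B)"
proof -
  have Ad: "\<And>i. A $ i $ i = 1" and Al: "\<And>i j. j < i \<Longrightarrow> A $ i $ j = 0"
    and Bd: "\<And>i. B $ i $ i = 1" and Bl: "\<And>i j. j < i \<Longrightarrow> B $ i $ j = 0"
    using A B unfolding ushape_def by auto
  have low: "(A ** B) $ a $ b = 0" if "b < a" for a b
    unfolding matrix_matrix_mult_def
  proof (simp, rule sum.neutral, rule ballI)
    fix k
    show "A $ a $ k * B $ k $ b = 0"
    proof (cases "k < a")
      case True then show ?thesis using Al by simp
    next
      case False then have "b < k" using that by simp
      then show ?thesis using Bl by simp
    qed
  qed
  have dg: "(A ** B) $ a $ a = 1" for a
  proof -
    have "(A ** B) $ a $ a = (\<Sum>k\<in>UNIV. A $ a $ k * B $ k $ a)"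
      by (simp add: matrix_matrix_mult_def)
    also have "\<dots> = A $ a $ a * B $ a $ a + (\<Sum>k\<in>UNIV - {a}. A $ a $ k * B $ k $ a)"
      by (simp add: sum.remove)
    also have "(\<Sum>k\<in>UNIV - {a}. A $ a $ k * B $ k $ a) = 0"
    proof (rule sum.neutral, rule ballI)
      fix k assume "k \<in> UNIV - {a}"
      then have "k < a \<or> a < k" by auto
      then show "A $ a $ k * B $ k $ a = 0"
      proof
        assume "k < a" then show ?thesis using Al by simp
      next
        assume "a < k" then show ?thesis using Bl by simp
      qed
    qed
    finally show ?thesis using Ad Bd by simp
  qed
  show ?thesis unfolding ushape_def using low dg by auto
qed

lemma lshape_mult:
  assumes A: "lshape A" and B: "lshape B"
  shows "lshape (A ** B)"
proof -
  have Ad: "\<And>i. A $ i $ i = 1" and Al: "\<And>i j. i < j \<Longrightarrow> A $ i $ j = 0"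
    and Bd: "\<And>i. B $ i $ i = 1" and Bl: "\<And>i j. i < j \<Longrightarrow> B $ i $ j = 0"
    using A B unfolding lshape_def by auto
  have low: "(A ** B) $ a $ b = 0" if "a < b" for a b
    unfolding matrix_matrix_mult_def
  proof (simp, rule sum.neutral, rule ballI)
    fix k
    show "A $ a $ k * B $ k $ b = 0"
    proof (cases "a < k")
      case True then show ?thesis using Al by simp
    next
      case False then have "k < b" using that by simp
      then show ?thesis using Bl by simp
    qed
  qed
  have dg: "(A ** B) $ a $ a = 1" for a
  proof -
    have "(A ** B) $ a $ a = (\<Sum>k\<in>UNIV. A $ a $ k * B $ k $ a)"
      by (simp add: matrix_matrix_mult_def)
    also have "\<dots> = A $ a $ a * B $ a $ a + (\<Sum>k\<in>UNIV - {a}. A $ a $ k * B $ k $ a)"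
      by (simp add: sum.remove)
    also have "(\<Sum>k\<in>UNIV - {a}. A $ a $ k * B $ k $ a) = 0"
    proof (rule sum.neutral, rule ballI)
      fix k assume "k \<in> UNIV - {a}"
      then have "k < a \<or> a < k" by auto
      then show "A $ a $ k * B $ k $ a = 0"
      proof
        assume "k < a" then show ?thesis using Bl by simp
      next
        assume "a < k" then show ?thesis using Al by simp
      qed
    qed
    finally show ?thesis using Ad Bd by simp
  qed
  show ?thesis unfolding lshape_def using low dg by auto
qed

lemma ushape_npow: "ushape h \<Longrightarrow> ushape (mat_npow h m)"
  by (induction m) (auto simp: ushape_mult, auto simp: ushape_def mat1_comp)

lemma lshape_npow: "lshape h \<Longrightarrow> lshape (mat_npow h m)"
  by (induction m) (auto simp: lshape_mult, auto simp: lshape_def mat1_comp)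

lemma ushape_factor:
  fixes M :: "'a::ring_1^('n::{finite,linorder})^'n::{finite,linorder}"
  assumes "ushape M"
  shows "\<exists>xs. M = prodl xs \<and> length xs \<le> card (supp M) \<and> (\<forall>x\<in>set xs. \<exists>i j c. i \<noteq> j \<and> x = Em i j c)"
proof (rule factor_gen[of "Collect ushape"])
  show "M \<in> Collect ushape" using assms by simp
  show "zer A i j \<in> Collect ushape" if "A \<in> Collect ushape" "i \<noteq> j" for A :: "'a^('n::{finite,linorder})^'n::{finite,linorder}" and i j
    using that by (auto simp: ushape_def zer_def)
  show "A $ i $ i = 1" if "A \<in> Collect ushape" for A :: "'a^('n::{finite,linorder})^'n::{finite,linorder}" and i
    using that by (auto simp: ushape_def)
  show "\<exists>i j. (i, j) \<in> supp A \<and> (\<forall>k. k \<noteq> j \<longrightarrow> A $ j $ k = 0)"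
    if A: "A \<in> Collect ushape" "supp A \<noteq> {}" for A :: "'a^('n::{finite,linorder})^'n::{finite,linorder}"
  proof -
    let ?R = "fst ` supp A"
    have fin: "finite ?R" by simp
    have neR: "?R \<noteq> {}" using A by simp
    define i where "i = Max ?R"
    have "i \<in> ?R" unfolding i_def using fin neR by (rule Max_in)
    then obtain j where ij: "(i, j) \<in> supp A" by force
    have "i < j" using ij A(1) by (auto simp: supp_def ushape_def) (metis neqE)
    moreover have "A $ j $ k = 0" if "k \<noteq> j" for k
    proof (rule ccontr)
      assume "A $ j $ k \<noteq> 0"
      then have "j \<in> ?R" using that by (force simp: supp_def)
      then have "j \<le> i" unfolding i_def using fin by simp
      with \<open>i < j\<close> show False by simp
    qed
    ultimately show ?thesis using ij by blast
  qed
qed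

lemma lshape_factor:
  fixes M :: "'a::ring_1^('n::{finite,linorder})^'n::{finite,linorder}"
  assumes "lshape M"
  shows "\<exists>xs. M = prodl xs \<and> length xs \<le> card (supp M) \<and> (\<forall>x\<in>set xs. \<exists>i j c. i \<noteq> j \<and> x = Em i j c)"
proof (rule factor_gen[of "Collect lshape"])
  show "M \<in> Collect lshape" using assms by simp
  show "zer A i j \<in> Collect lshape" if "A \<in> Collect lshape" "i \<noteq> j" for A :: "'a^('n::{finite,linorder})^'n::{finite,linorder}" and i j
    using that by (auto simp: lshape_def zer_def)
  show "A $ i $ i = 1" if "A \<in> Collect lshape" for A :: "'a^('n::{finite,linorder})^'n::{finite,linorder}" and i
    using that by (auto simp: lshape_def)
  show "\<exists>i j. (i, j) \<in> supp A \<and> (\<forall>k. k \<noteq> j \<longrightarrow> A $ j $ k = 0)"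
    if A: "A \<in> Collect lshape" "supp A \<noteq> {}" for A :: "'a^('n::{finite,linorder})^'n::{finite,linorder}"
  proof -
    let ?R = "fst ` supp A"
    have fin: "finite ?R" by simp
    have neR: "?R \<noteq> {}" using A by simp
    define i where "i = Min ?R"
    have "i \<in> ?R" unfolding i_def using fin neR by (rule Min_in)
    then obtain j where ij: "(i, j) \<in> supp A" by force
    have "j < i" using ij A(1) by (auto simp: supp_def lshape_def) (metis neqE)
    moreover have "A $ j $ k = 0" if "k \<noteq> j" for k
    proof (rule ccontr)
      assume "A $ j $ k \<noteq> 0"
      then have "j \<in> ?R" using that by (force simp: supp_def)
      then have "i \<le> j" unfolding i_def using fin by simp
      with \<open>j < i\<close> show False by simp
    qed
    ultimately show ?thesis using ij by blast
  qed
qed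

lemma prod_bound:
  fixes \<phi> :: "'a::ring_1^('n::{finite,linorder})^'n::{finite,linorder} \<Rightarrow> real"
  assumes C: "\<And>g h. g \<in> EL \<Longrightarrow> h \<in> EL \<Longrightarrow> \<bar>\<phi> (g ** h) - \<phi> g - \<phi> h\<bar> \<le> C"
    and e0: "\<And>i j c. i \<noteq> j \<Longrightarrow> \<phi> (Em i j c) = 0"
    and one: "\<phi> (mat 1) = 0"
  shows "(\<forall>x\<in>set xs. \<exists>i j c. i \<noteq> j \<and> x = Em i j c) \<Longrightarrow> prodl xs \<in> EL \<and> \<bar>\<phi> (prodl xs)\<bar> \<le> real (length xs) * C"
proof (induction xs)
  case Nil
  show ?case by (simp add: prodl_def one EL_one)
next
  case (Cons x xs)
  then have IH: "prodl xs \<in> EL" "\<bar>\<phi> (prodl xs)\<bar> \<le> real (length xs) * C" by auto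
  obtain i j c where x: "i \<noteq> j" "x = Em i j c" using Cons.prems by auto
  have xe: "x \<in> EL" using x by (simp add: EL_gen Em_elem)
  have px: "\<phi> x = 0" using x e0 by simp
  have eq: "prodl (x # xs) = x ** prodl xs" by (simp add: prodl_def)
  have "\<bar>\<phi> (x ** prodl xs) - \<phi> x - \<phi> (prodl xs)\<bar> \<le> C" using C xe IH(1) by blast
  then have "\<bar>\<phi> (prodl (x # xs))\<bar> \<le> real (length (x # xs)) * C"
    using IH(2) px eq by (simp add: distrib_right)
  moreover have "prodl (x # xs) \<in> EL" using eq xe IH(1) by (simp add: EL_mult)
  ultimately show ?case by blast
qed

theorem lemma2p5:
  fixes \<phi> :: "'a::ring_1 ^('n::{finite,linorder}) ^'n::{finite,linorder} \<Rightarrow> real"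
  assumes "CARD('n) \<ge> 3"
    and "quasi_hom_on EL (**) \<phi>"
    and "homogeneous_EL \<phi>"
  shows "(\<forall>s. elementary_mat s \<longrightarrow> \<phi> s = 0) \<and>
         (\<forall>h \<in> upper_unitri \<union> lower_unitri. \<phi> h = 0)"
proof -
  obtain C where C0: "\<forall>g\<in>EL. \<forall>h\<in>EL. \<bar>\<phi> (g ** h) - \<phi> g - \<phi> h\<bar> \<le> C"
    using assms(2) unfolding quasi_hom_on_def by blast
  have C: "\<And>g h. g \<in> EL \<Longrightarrow> h \<in> EL \<Longrightarrow> \<bar>\<phi> (g ** h) - \<phi> g - \<phi> h\<bar> \<le> C"
    using C0 by blast
  have hom: "\<And>g m. g \<in> EL \<Longrightarrow> \<phi> (mat_ipow g m) = of_int m * \<phi> g"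
    using assms(3) unfolding homogeneous_EL_def by blast
  have one: "\<phi> (mat 1) = 0"
    using hom[OF EL_one, of 0] by (simp add: mat_ipow_def)
  have Cpos: "0 \<le> C" using C[OF EL_one EL_one] one by (simp add: matrix_mul_lid)
  have e0: "\<And>i j c. i \<noteq> j \<Longrightarrow> \<phi> (Em i j c) = 0"
    using part1[OF assms(1) C assms(3)] by blast
  have P1: "\<forall>s. elementary_mat s \<longrightarrow> \<phi> s = 0"
  proof (intro allI impI)
    fix s :: "'a^('n::{finite,linorder})^'n::{finite,linorder}" assume "elementary_mat s"
    from elem_cases[OF this] show "\<phi> s = 0"
    proof
      assume "s = mat 1" then show ?thesis using one by simp
    next
      assume "\<exists>i j x. i \<noteq> j \<and> s = Em i j x"
      then obtain i j x where "i \<noteq> j" "s = Em i j x" by blast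
      then show ?thesis using e0 by simp
    qed
  qed
  let ?K = "real (card (UNIV :: ('n \<times> 'n) set))"
  have shaped: "\<phi> h = 0" if h: "h \<in> EL" and pw: "\<And>m. \<exists>xs. mat_npow h m = prodl xs \<and> length xs \<le> card (supp (mat_npow h m)) \<and> (\<forall>x\<in>set xs. \<exists>i j c. i \<noteq> j \<and> x = Em i j c)" for h
  proof (rule arch_zero[of _ "?K * C"])
    fix m :: nat
    obtain xs where xs: "mat_npow h m = prodl xs" "length xs \<le> card (supp (mat_npow h m))"
      "\<forall>x\<in>set xs. \<exists>i j c. i \<noteq> j \<and> x = Em i j c" using pw[of m] by blast
    have b: "\<bar>\<phi> (prodl xs)\<bar> \<le> real (length xs) * C" using prod_bound[OF C e0 one xs(3)] by blast
    have "card (supp (mat_npow h m)) \<le> card (UNIV :: ('n \<times> 'n) set)" by (rule card_mono) auto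
    then have "real (length xs) \<le> ?K" using xs(2) by linarith
    then have "real (length xs) * C \<le> ?K * C" using Cpos by (rule mult_right_mono)
    moreover have "\<phi> (mat_npow h m) = real m * \<phi> h" using hom[OF h, of "int m"] by (simp add: ipow_nat)
    then have "\<phi> (prodl xs) = real m * \<phi> h" using xs(1) by simp
    then have "\<bar>real m * \<phi> h\<bar> \<le> real (length xs) * C" using b by simp
    ultimately show "real m * \<bar>\<phi> h\<bar> \<le> ?K * C" by (simp add: abs_mult)
  qed
  have P2: "\<forall>h \<in> upper_unitri \<union> lower_unitri. \<phi> h = 0"
  proof
    fix h :: "'a^('n::{finite,linorder})^'n::{finite,linorder}" assume "h \<in> upper_unitri \<union> lower_unitri"
    then show "\<phi> h = 0"
    proof
      assume "h \<in> upper_unitri"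
      then have hu: "h \<in> EL" "ushape h" by (auto simp: upper_unitri_def ushape_def)
      show ?thesis
      proof (rule shaped[OF hu(1)])
        fix m show "\<exists>xs. mat_npow h m = prodl xs \<and> length xs \<le> card (supp (mat_npow h m)) \<and> (\<forall>x\<in>set xs. \<exists>i j c. i \<noteq> j \<and> x = Em i j c)"
          by (rule ushape_factor[OF ushape_npow[OF hu(2)]])
      qed
    next
      assume "h \<in> lower_unitri"
      then have hu: "h \<in> EL" "lshape h" by (auto simp: lower_unitri_def lshape_def)
      show ?thesis
      proof (rule shaped[OF hu(1)])
        fix m show "\<exists>xs. mat_npow h m = prodl xs \<and> length xs \<le> card (supp (mat_npow h m)) \<and> (\<forall>x\<in>set xs. \<exists>i j c. i \<noteq> j \<and> x = Em i j c)"
          by (rule lshape_factor[OF lshape_npow[OF hu(2)]])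
      qed
    qed
  qed
  show ?thesis using P1 P2 by blast
qed

end
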